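(* For the submodule $M=[z-w]$ of $H^2(\mathbb D^2)$ and every integer $k\ge1$, \[ \Sigma_k(M)=\sum_{m=1}^\infty\frac{m^2}{(m+k-1)^2(m+k)^2}=(2k^2-2k+1)\sum_{n=k}^\infty\frac1{n^2}-(2k-1). \] Consequently $\Sigma_1=\frac{\pi^2}{6}-1$, $\Sigma_2=\frac56\pi^2-8$, $\Sigma_3=\frac{13}{6}\pi^2-\frac{85}{4}$, the sequence $\{\Sigma_k(M)\}_{k\ge1}$ is strictly decreasing, and as $k\to\infty$ \[ \Sigma_k(M)=\frac1{3k}+\frac1{6k^2}+\frac1{10k^3}+\frac1{15k^4}+O\!\left(\frac1{k^5}\right). \]
   Context: $H^2(\mathbb D^2)$ is the Hardy space on the bidisk (monomials $z^aw^b$ orthonormal); $[q]$ is the smallest closed subspace containing $q$ invariant under multiplication by $z$ and $w$. Let $p=z-w$. For $n\ge0$ let $A^n=(a_{i,j})_{i,j=0}^n$ with $a_{i,j}=\langle pw^{|i-j|},pz^{|i-j|}\rangle$ (the tridiagonal Toeplitz matrix with diagonal $2$ and off-diagonals $-1$); $D_0=1$, $D_n=\det A^{n-1}$ ($n\ge1$); $A^n_{i,j}$ is the $(i,j)$ cofactor of $A^n$ ($(-1)^{i+j}$ times the minor deleting row $i$ and column $j$). Define $\phi_0=\psi_0=p/\|p\|$ and for $n\ge1$ $\phi_n=\frac{\sum_{j=0}^n pA^n_{0,j}z^jw^{n-j}}{\sqrt{D_{n+1}D_n}}$, $\psi_n=\frac{\sum_{j=0}^n pA^n_{n,j}z^jw^{n-j}}{\sqrt{D_{n+1}D_n}}$,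 orthonormal bases of $M\ominus zM$ and $M\ominus wM$ for $M=[p]$. For $k\ge0$, $\Sigma_k(M):=\sum_{n\ge0}|\langle w^k\phi_n,z^k\psi_n\rangle|^2$. *)

theory Defs
  imports "HOL-Analysis.Analysis" "HOL-Library.Landau_Symbols" "Jordan_Normal_Form.Determinant"
begin

text \<open>Polynomials in two variables z, w, represented by their coefficient functions:
  f (a,b) is the coefficient of z^a w^b.  Monomials are orthonormal in H^2(D^2), so the
  inner product of two polynomials is the sum of products of coefficients.\<close>

type_synonym poly2 = "nat \<times> nat \<Rightarrow> complex"

definition h2_inner :: "poly2 \<Rightarrow> poly2 \<Rightarrow> complex" where
  "h2_inner f g = (\<Sum>\<^sub>\<infinity> ab. f ab * cnj (g ab))"

definition h2_norm :: "poly2 \<Rightarrow> real" where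
  "h2_norm f = sqrt (Re (h2_inner f f))"

definition mono_mul :: "nat \<Rightarrow> nat \<Rightarrow> poly2 \<Rightarrow> poly2" where
  "mono_mul a b f = (\<lambda>(i, j). if a \<le> i \<and> b \<le> j then f (i - a, j - b) else 0)"

definition p_zw :: poly2 where
  "p_zw = (\<lambda>(i, j). if (i, j) = (1, 0) then 1 else if (i, j) = (0, 1) then -1 else 0)"

definition absdiff :: "nat \<Rightarrow> nat \<Rightarrow> nat" where
  "absdiff i j = (if i \<le> j then j - i else i - j)"

definition A_mat :: "nat \<Rightarrow> complex mat" where
  "A_mat n = mat (n + 1) (n + 1)
     (\<lambda>(i, j). h2_inner (mono_mul 0 (absdiff i j) p_zw) (mono_mul (absdiff i j) 0 p_zw))"

definition D_det :: "nat \<Rightarrow> complex" where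
  "D_det n = (if n = 0 then 1 else det (A_mat (n - 1)))"

definition phi :: "nat \<Rightarrow> poly2" where
  "phi n = (if n = 0 then (\<lambda>ab. p_zw ab / complex_of_real (h2_norm p_zw))
            else (\<lambda>ab. (\<Sum>j\<le>n. cofactor (A_mat n) 0 j * mono_mul j (n - j) p_zw ab)
                        / csqrt (D_det (n + 1) * D_det n)))"

definition psi :: "nat \<Rightarrow> poly2" where
  "psi n = (if n = 0 then (\<lambda>ab. p_zw ab / complex_of_real (h2_norm p_zw))
            else (\<lambda>ab. (\<Sum>j\<le>n. cofactor (A_mat n) n j * mono_mul j (n - j) p_zw ab)
                        / csqrt (D_det (n + 1) * D_det n)))"

definition Sigma_term :: "nat \<Rightarrow> nat \<Rightarrow> real" where
  "Sigma_term k n = (cmod (h2_inner (mono_mul 0 k (phi n)) (mono_mul k 0 (psi n))))\<^sup>2"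

definition Sigma_M :: "nat \<Rightarrow> real" where
  "Sigma_M k = (\<Sum>n. Sigma_term k n)"

end

theory Submission
  imports Defs "HOL-Real_Asymp.Real_Asymp"
begin

lemma h2_inner_fin:
  assumes "finite S" "\<And>ab. ab \<notin> S \<Longrightarrow> f ab = 0"
  shows "h2_inner f g = (\<Sum>ab\<in>S. f ab * cnj (g ab))"
proof -
  have "h2_inner f g = infsum (\<lambda>ab. f ab * cnj (g ab)) S"
    unfolding h2_inner_def by (rule infsum_cong_neutral) (auto simp: assms)
  then show ?thesis using assms by simp
qed

lemma A_entry:
  "h2_inner (mono_mul 0 d p_zw) (mono_mul d 0 p_zw) = (if d = 0 then 2 else if d = 1 then -1 else 0)"
proof -
  have "h2_inner (mono_mul 0 d p_zw) (mono_mul d 0 p_zw) =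
     (\<Sum>ab\<in>{(1,d),(0,Suc d)}. mono_mul 0 d p_zw ab * cnj (mono_mul d 0 p_zw ab))"
    by (rule h2_inner_fin) (auto simp: mono_mul_def p_zw_def split: if_splits)
  also have "\<dots> = (if d = 0 then 2 else if d = 1 then -1 else 0)"
    by (auto simp: mono_mul_def p_zw_def)
  finally show ?thesis .
qed

lemma A_carrier: "A_mat n \<in> carrier_mat (Suc n) (Suc n)"
  by (simp add: A_mat_def)

lemma A_index: assumes "i \<le> n" "k \<le> n"
  shows "A_mat n $$ (i,k) = (if k = i then 2 else if k + 1 = i \<or> k = i + 1 then -1 else 0)"
  using assms by (auto simp: A_mat_def A_entry absdiff_def)

lemma A_rowsum: assumes "i \<le> n"
  shows "(\<Sum>k<Suc n. A_mat n $$ (i,k) * c k) =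
    2 * c i - (if 0 < i then c (i - 1) else 0) - (if i < n then c (i + 1) else 0)"
proof -
  have "(\<Sum>k<Suc n. A_mat n $$ (i,k) * c k) =
     (\<Sum>k<Suc n. (if k = i then 2 * c k else 0) - (if k = i - 1 \<and> 0 < i then c k else 0)
          - (if k = i + 1 then c k else 0))"
    using assms by (intro sum.cong) (auto simp: A_index)
  also have "\<dots> = 2 * c i - (if 0 < i then c (i - 1) else 0) - (if i < n then c (i + 1) else 0)"
    using assms by (auto simp: sum_subtractf sum.delta' lessThan_Suc_atMost)
  finally show ?thesis .
qed

lemma alien:
  assumes A: "A \<in> carrier_mat n n" and ij: "i < n" "j < n" "i \<noteq> j"
  shows "(\<Sum>k<n. A $$ (i,k) * cofactor A j k) = 0"
proof -
  have "(A * adj_mat A) $$ (i,j) = (\<Sum> k < n. A $$ (i,k) * cofactor A j k)" 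
    unfolding times_mat_def scalar_prod_def adj_mat_def using ij A by (auto intro: sum.cong)
  moreover have "(A * adj_mat A) $$ (i,j) = 0"
    using adj_mat(2)[OF A] ij by simp
  ultimately show ?thesis by simp
qed

lemma cof_0n: "cofactor (A_mat n) 0 n = 1"
proof -
  let ?M = "mat_delete (A_mat n) 0 n"
  have car: "?M \<in> carrier_mat n n" using mat_delete_carrier[OF A_carrier[of n]] by simp
  have ent: "?M $$ (i,j) = A_mat n $$ (Suc i, j)" if "i < n" "j < n" for i j
    using that by (simp add: mat_delete_def A_mat_def)
  have "upper_triangular ?M"
    unfolding upper_triangular_def using car by (auto simp: ent A_index)
  then have "det ?M = prod_list (diag_mat ?M)" using det_upper_triangular car by blast
  also have "\<dots> = (\<Prod>i=0..<n. -1)"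
    unfolding prod_list_diag_prod using car by (intro prod.cong) (auto simp: ent A_index)
  finally have "det ?M = (-1)^n" by simp
  then show ?thesis unfolding cofactor_def by (simp flip: power_add)
qed

lemma cof_n0: "cofactor (A_mat n) n 0 = 1"
proof -
  let ?M = "mat_delete (A_mat n) n 0"
  have car: "?M \<in> carrier_mat n n" using mat_delete_carrier[OF A_carrier[of n]] by simp
  have ent: "?M $$ (i,j) = A_mat n $$ (i, Suc j)" if "i < n" "j < n" for i j
    using that by (simp add: mat_delete_def A_mat_def)
  have "det ?M = prod_list (diag_mat ?M)"
    by (rule det_lower_triangular[OF _ car]) (auto simp: ent A_index)
  also have "\<dots> = (\<Prod>i=0..<n. -1)"
    unfolding prod_list_diag_prod using car by (intro prod.cong) (auto simp: ent A_index)
  finally have "det ?M = (-1)^n" by simp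
  then show ?thesis unfolding cofactor_def by (simp flip: power_add)
qed

lemma rec0:
  assumes "1 \<le> i" "i \<le> n"
  shows "2 * cofactor (A_mat n) 0 i - cofactor (A_mat n) 0 (i - 1)
     - (if i < n then cofactor (A_mat n) 0 (i + 1) else 0) = 0"
  using alien[OF A_carrier[of n], of i 0] A_rowsum[of i n "\<lambda>k. cofactor (A_mat n) 0 k"] assms
  by simp

lemma recn:
  assumes "i < n"
  shows "2 * cofactor (A_mat n) n i - (if 0 < i then cofactor (A_mat n) n (i - 1) else 0)
     - cofactor (A_mat n) n (i + 1) = 0"
  using alien[OF A_carrier[of n], of i n] A_rowsum[of i n "\<lambda>k. cofactor (A_mat n) n k"] assms
  by simp

lemma cof0_aux: "t \<le> n \<Longrightarrow> cofactor (A_mat n) 0 (n - t) = of_nat (t + 1)"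
proof (induction t rule: less_induct)
  case (less t)
  show ?case
  proof (cases "t = 0")
    case True then show ?thesis using cof_0n by simp
  next
    case False
    show ?thesis
    proof (cases "t = 1")
      case True
      have "n \<ge> 1" using less True by simp
      then have "2 * cofactor (A_mat n) 0 n - cofactor (A_mat n) 0 (n - 1) = 0"
        using rec0[of n n] by simp
      then show ?thesis using cof_0n True by simp
    next
      case False
      then obtain s where s: "t = s + 2" using \<open>t \<noteq> 0\<close>
        by (metis add_2_eq_Suc' not0_implies_Suc One_nat_def)
      have i1: "cofactor (A_mat n) 0 (n - s) = of_nat (s + 1)" using less s by simp
      have i2: "cofactor (A_mat n) 0 (n - (s+1)) = of_nat (s + 2)" using less s by simp
      have "2 * cofactor (A_mat n) 0 (n - (s+1)) - cofactor (A_mat n) 0 (n - (s+1) - 1)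
         - (if n - (s+1) < n then cofactor (A_mat n) 0 (n - (s+1) + 1) else 0) = 0"
        using rec0[of "n - (s+1)" n] less s by simp
      moreover have "n - (s+1) + 1 = n - s" "n - (s+1) - 1 = n - t" using less s by auto
      ultimately show ?thesis using i1 i2 less s by (simp add: algebra_simps)
    qed
  qed
qed

lemma cof0: "j \<le> n \<Longrightarrow> cofactor (A_mat n) 0 j = of_nat (n + 1 - j)"
  using cof0_aux[of "n - j" n] by (simp add: Suc_diff_le)

lemma cofn: "j \<le> n \<Longrightarrow> cofactor (A_mat n) n j = of_nat (j + 1)"
proof (induction j rule: less_induct)
  case (less j)
  show ?case
  proof (cases "j = 0")
    case True then show ?thesis using cof_n0 by simp
  next
    case False
    show ?thesis
    proof (cases "j = 1")
      case True
      then show ?thesis using recn[of 0 n] cof_n0 less by simp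
    next
      case False
      then obtain s where s: "j = s + 2" using \<open>j \<noteq> 0\<close>
        by (metis add_2_eq_Suc' not0_implies_Suc One_nat_def)
      have "2 * cofactor (A_mat n) n (s+1) - cofactor (A_mat n) n s
         - cofactor (A_mat n) n (s + 2) = 0"
        using recn[of "s+1" n] less s by simp
      then show ?thesis using less s by (simp add: algebra_simps)
    qed
  qed
qed

lemma detA: "det (A_mat n) = of_nat (n + 2)"
proof -
  have "det (A_mat n) = (\<Sum>j<Suc n. A_mat n $$ (0,j) * cofactor (A_mat n) 0 j)"
    using laplace_expansion_row[OF A_carrier[of n], of 0] by simp
  also have "\<dots> = 2 * cofactor (A_mat n) 0 0 - (if 0 < n then cofactor (A_mat n) 0 1 else 0)"
    using A_rowsum[of 0 n "\<lambda>k. cofactor (A_mat n) 0 k"] by simp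
  also have "\<dots> = of_nat (n + 2)"
    by (cases "n = 0") (auto simp: cof0 of_nat_diff)
  finally show ?thesis .
qed

lemma D_det_val: "D_det m = of_nat (m + 1)"
  by (cases m) (auto simp: D_det_def detA)

definition sn :: "nat \<Rightarrow> complex" where
  "sn n = complex_of_real (sqrt (real ((n+2)*(n+1))))"

lemma csqrt_D: "csqrt (D_det (n + 1) * D_det n) = sn n"
proof -
  have "D_det (n + 1) * D_det n = complex_of_real (real ((n+2)*(n+1)))"
    by (simp add: D_det_val algebra_simps)
  then show ?thesis unfolding sn_def by (simp only: csqrt_of_real of_nat_0_le_iff)
qed

lemma norm_p: "h2_norm p_zw = sqrt 2"
proof -
  have "h2_inner p_zw p_zw = (\<Sum>ab\<in>{(1,0),(0,1)}. p_zw ab * cnj (p_zw ab))"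
    by (rule h2_inner_fin) (auto simp: p_zw_def split: if_splits)
  also have "\<dots> = 2" by (simp add: p_zw_def)
  finally show ?thesis by (simp add: h2_norm_def)
qed

lemma mono_p: assumes "l \<le> n"
  shows "mono_mul l (n-l) p_zw (i,j) = (if i+j = n+1 \<and> 0 < i \<and> l = i-1 then 1 else 0)
     - (if i+j = n+1 \<and> i \<le> n \<and> l = i then 1 else 0)"
  using assms by (auto simp: mono_mul_def p_zw_def)

lemma comb: "(\<Sum>l\<le>n. c l * mono_mul l (n-l) p_zw (i,j)) =
   (if i+j = n+1 \<and> 0 < i then c (i-1) else 0) - (if i+j = n+1 \<and> i \<le> n then c i else 0)"
proof -
  have "(\<Sum>l\<le>n. c l * mono_mul l (n-l) p_zw (i,j)) =
     (\<Sum>l\<le>n. (if l = i - 1 \<and> i+j = n+1 \<and> 0 < i then c l else 0) - (if l = i \<and> i+j = n+1 \<and> i \<le> n then c l else 0))"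
    by (intro sum.cong) (auto simp: mono_p)
  also have "\<dots> = (if i+j = n+1 \<and> 0 < i then c (i-1) else 0) - (if i+j = n+1 \<and> i \<le> n then c i else 0)"
    by (auto simp: sum_subtractf sum.delta')
  finally show ?thesis .
qed

lemma sn0: "sn 0 = complex_of_real (sqrt 2)" by (simp add: sn_def)

lemma phi_val: "phi n (i,j) = (if i + j = n+1 then (if i = 0 then - of_nat (n+1) else 1) else 0) / sn n"
proof (cases "n = 0")
  case True
  have "phi 0 = (\<lambda>ab. p_zw ab / complex_of_real (sqrt 2))" by (simp add: phi_def norm_p)
  then show ?thesis using True by (auto simp: sn0 p_zw_def)
next
  case False
  have "phi n (i,j) = (\<Sum>l\<le>n. cofactor (A_mat n) 0 l * mono_mul l (n - l) p_zw (i,j)) / csqrt (D_det (n + 1) * D_det n)"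
    using False by (simp add: phi_def)
  also have "\<dots> = (\<Sum>l\<le>n. of_nat (n + 1 - l) * mono_mul l (n - l) p_zw (i,j)) / sn n"
    unfolding csqrt_D by (intro arg_cong[where f="\<lambda>x. x / sn n"] sum.cong) (auto simp: cof0)
  also have "\<dots> = (if i + j = n+1 then (if i = 0 then - of_nat (n+1) else 1) else 0) / sn n"
    by (cases "i = n+1") (auto simp: comb of_nat_diff)
  finally show ?thesis .
qed

lemma psi_val: "psi n (i,j) = (if i + j = n+1 then (if i = n+1 then of_nat (n+1) else -1) else 0) / sn n"
proof (cases "n = 0")
  case True
  have "psi 0 = (\<lambda>ab. p_zw ab / complex_of_real (sqrt 2))" by (simp add: psi_def norm_p)
  then show ?thesis using True by (auto simp: sn0 p_zw_def)
next
  case False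
  have "psi n (i,j) = (\<Sum>l\<le>n. cofactor (A_mat n) n l * mono_mul l (n - l) p_zw (i,j)) / csqrt (D_det (n + 1) * D_det n)"
    using False by (simp add: psi_def)
  also have "\<dots> = (\<Sum>l\<le>n. of_nat (l + 1) * mono_mul l (n - l) p_zw (i,j)) / sn n"
    unfolding csqrt_D by (intro arg_cong[where f="\<lambda>x. x / sn n"] sum.cong) (auto simp: cofn)
  also have "\<dots> = (if i + j = n+1 then (if i = n+1 then of_nat (n+1) else -1) else 0) / sn n"
    by (cases "i = n+1") (auto simp: comb of_nat_diff)
  finally show ?thesis .
qed

lemma h2_inner_fin2:
  assumes "finite S" "\<And>ab. ab \<notin> S \<Longrightarrow> f ab * cnj (g ab) = 0"
  shows "h2_inner f g = (\<Sum>ab\<in>S. f ab * cnj (g ab))"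
proof -
  have "h2_inner f g = infsum (\<lambda>ab. f ab * cnj (g ab)) S"
    unfolding h2_inner_def by (rule infsum_cong_neutral) (auto simp: assms)
  then show ?thesis using assms by simp
qed

lemma sn_cnj: "cnj (sn n) = sn n" by (simp add: sn_def)

lemma sn_sq: "sn n * cnj (sn n) = complex_of_real (real ((n+2)*(n+1)))"
proof -
  have "sqrt (real ((n+2)*(n+1))) * sqrt (real ((n+2)*(n+1))) = real ((n+2)*(n+1))"
    by (rule real_sqrt_mult_self[THEN trans]) simp
  then show ?thesis unfolding sn_cnj unfolding sn_def of_real_mult[symmetric] by metis
qed

lemma sn_nz: "sn n \<noteq> 0"
  unfolding sn_def of_real_eq_0_iff real_sqrt_eq_zero_cancel_iff of_nat_eq_0_iff by simp

lemma inner_val: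
  assumes k: "1 \<le> k"
  shows "h2_inner (mono_mul 0 k (phi n)) (mono_mul k 0 (psi n)) =
     - of_nat (n + 2 - k) / complex_of_real (real ((n+2)*(n+1)))"
proof -
  define T where "T = (\<lambda>a. (a, n+1+k-a)) ` {k..n+1}"
  define c where "c = - 1 / complex_of_real (real ((n+2)*(n+1)))"
  have memT: "(a,b) \<in> T \<longleftrightarrow> k \<le> a \<and> k \<le> b \<and> a + b = n+1+k" for a b
    unfolding T_def using k by auto
  have pt: "mono_mul 0 k (phi n) ab * cnj (mono_mul k 0 (psi n) ab) = (if ab \<in> T then c else 0)" for ab
  proof (cases ab)
    case (Pair a b)
    show ?thesis
    proof (cases "k \<le> a \<and> k \<le> b \<and> a + b = n+1+k")
      case True
      then have "mono_mul 0 k (phi n) ab * cnj (mono_mul k 0 (psi n) ab)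
          = (1 / sn n) * cnj (- 1 / sn n)"
        using Pair k by (simp add: mono_mul_def phi_val psi_val, intro impI, arith)
      also have "\<dots> = c" unfolding c_def using sn_sq[of n] sn_nz[of n]
        by (simp add: divide_simps)
      finally show ?thesis using True Pair memT by simp
    next
      case False
      then show ?thesis using Pair memT by (auto simp: mono_mul_def phi_val psi_val)
    qed
  qed
  have "h2_inner (mono_mul 0 k (phi n)) (mono_mul k 0 (psi n)) = (\<Sum>ab\<in>T. c)"
    by (subst h2_inner_fin2[where S=T]) (auto simp: T_def pt)
  also have "card T = n + 2 - k"
    unfolding T_def by (subst card_image) (auto simp: inj_on_def)
  then have "(\<Sum>ab\<in>T. c) = of_nat (n + 2 - k) * c" by simp
  finally show ?thesis by (simp add: c_def)
qed

lemma Sigma_term_val: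
  assumes "1 \<le> k"
  shows "Sigma_term k n = (real (n + 2 - k) / real ((n+2)*(n+1)))\<^sup>2"
proof -
  have "cmod (- of_nat (n + 2 - k) / complex_of_real (real ((n+2)*(n+1))))
       = real (n + 2 - k) / real ((n+2)*(n+1))"
    by (simp only: norm_divide norm_minus_cancel norm_of_nat norm_of_real abs_of_nat)
  then show ?thesis unfolding Sigma_term_def inner_val[OF assms] by simp
qed

definition Qs :: "nat \<Rightarrow> real" where "Qs k = (\<Sum>n. 1 / (real (n + k))\<^sup>2)"

definition gt :: "nat \<Rightarrow> nat \<Rightarrow> real" where
  "gt k m = (real (m + 1))\<^sup>2 / ((real (m + 1) + real k - 1)\<^sup>2 * (real (m + 1) + real k)\<^sup>2)"

lemma summable_sq: "1 \<le> k \<Longrightarrow> summable (\<lambda>n. 1 / (real (n + k))\<^sup>2)"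
proof -
  assume k: "1 \<le> k"
  have "summable (\<lambda>n. 1 / (real (Suc n))\<^sup>2)"
    using inverse_squares_sums by (simp add: sums_iff add.commute)
  then have "summable (\<lambda>n. 1 / (real n)\<^sup>2)" using summable_Suc_iff[of "\<lambda>n. 1 / (real n)\<^sup>2"] by blast
  then show ?thesis using summable_iff_shift[of "\<lambda>n. 1 / (real n)\<^sup>2" k] by simp
qed

lemma sums_sq: "1 \<le> k \<Longrightarrow> (\<lambda>n. 1 / (real (n + k))\<^sup>2) sums Qs k"
  unfolding Qs_def using summable_sq by (simp add: summable_sums)

lemma Qs1: "Qs 1 = pi\<^sup>2 / 6"
proof -
  have "(\<lambda>n. 1 / (real (n + 1))\<^sup>2) sums (pi\<^sup>2 / 6)"
    using inverse_squares_sums by (simp add: add.commute)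
  then show ?thesis unfolding Qs_def by (simp add: sums_iff)
qed

lemma Qs_split: "1 \<le> k \<Longrightarrow> Qs k = 1 / (real k)\<^sup>2 + Qs (k + 1)"
proof -
  assume k: "1 \<le> k"
  have "(\<Sum>n. 1 / (real (Suc n + k))\<^sup>2) = Qs k - 1 / (real (0 + k))\<^sup>2"
    unfolding Qs_def by (rule suminf_split_head[OF summable_sq[OF k]])
  moreover have "(\<Sum>n. 1 / (real (Suc n + k))\<^sup>2) = Qs (k + 1)"
    unfolding Qs_def by (simp add: add.commute add.left_commute)
  ultimately show ?thesis by simp
qed

lemma pf_id:
  fixes a c :: real assumes a: "a > 0"
  shows "(a - c + 1)\<^sup>2 / (a\<^sup>2 * (a+1)\<^sup>2) = c\<^sup>2 * (1 / (a+1)\<^sup>2) + (c-1)\<^sup>2 * (1 / a\<^sup>2) - 2*c*(c-1)*(1/a - 1/(a+1))"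
proof -
  have b: "a + 1 \<noteq> 0" "a \<noteq> 0" using a by auto
  have "c\<^sup>2 * (1 / (a+1)\<^sup>2) + (c-1)\<^sup>2 * (1 / a\<^sup>2) - 2*c*(c-1)*(1/a - 1/(a+1))
     = (c\<^sup>2 * a\<^sup>2 + (c-1)\<^sup>2 * (a+1)\<^sup>2 - 2*c*(c-1)*(a*(a+1))) / (a\<^sup>2 * (a+1)\<^sup>2)"
    using b by (simp add: divide_simps) (simp add: algebra_simps power2_eq_square)
  also have "c\<^sup>2 * a\<^sup>2 + (c-1)\<^sup>2 * (a+1)\<^sup>2 - 2*c*(c-1)*(a*(a+1)) = (a - c + 1)\<^sup>2"
    by (simp add: algebra_simps power2_eq_square)
  finally show ?thesis ..
qed

lemma gt_pf:
  assumes "1 \<le> k"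
  shows "gt k m = (real k)\<^sup>2 * (1 / (real (m + (k+1)))\<^sup>2) + (real k - 1)\<^sup>2 * (1 / (real (m + k))\<^sup>2)
     - 2 * real k * (real k - 1) * (1 / real (m + k) - 1 / real (Suc m + k))"
proof -
  have a: "real m + real k > 0" using assms by simp
  have "gt k m = (real m + real k - real k + 1)\<^sup>2 / ((real m + real k)\<^sup>2 * (real m + real k + 1)\<^sup>2)"
    unfolding gt_def by (simp add: add_ac)
  also have "\<dots> = (real k)\<^sup>2 * (1 / (real m + real k + 1)\<^sup>2) + (real k - 1)\<^sup>2 * (1 / (real m + real k)\<^sup>2)
     - 2 * real k * (real k - 1) * (1 / (real m + real k) - 1 / (real m + real k + 1))"
    by (rule pf_id[OF a])
  finally show ?thesis by (simp add: add_ac)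
qed

lemma gt_sums:
  assumes k: "1 \<le> k"
  shows "gt k sums ((2 * (real k)\<^sup>2 - 2 * real k + 1) * Qs k - (2 * real k - 1))"
proof -
  have s1: "(\<lambda>m. 1 / (real (m + (k+1)))\<^sup>2) sums Qs (k+1)" using sums_sq[of "k+1"] by simp
  have s2: "(\<lambda>m. 1 / (real (m + k))\<^sup>2) sums Qs k" using sums_sq k by simp
  have lim: "(\<lambda>m. 1 / real (m + k)) \<longlonglongrightarrow> 0"
    using LIMSEQ_ignore_initial_segment[OF lim_inverse_n', of k] by (simp add: add.commute)
  have s3: "(\<lambda>m. 1 / real (m + k) - 1 / real (Suc m + k)) sums (1 / real k)"
    using telescope_sums'[OF lim] by simp
  have S: "(\<lambda>m. (real k)\<^sup>2 * (1 / (real (m + (k+1)))\<^sup>2) + (real k - 1)\<^sup>2 * (1 / (real (m + k))\<^sup>2)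
     - 2 * real k * (real k - 1) * (1 / real (m + k) - 1 / real (Suc m + k))) sums
     ((real k)\<^sup>2 * Qs (k+1) + (real k - 1)\<^sup>2 * Qs k - 2 * real k * (real k - 1) * (1 / real k))"
    by (intro sums_diff sums_add sums_mult s1 s2 s3)
  moreover have E: "(real k)\<^sup>2 * Qs (k+1) + (real k - 1)\<^sup>2 * Qs k - 2 * real k * (real k - 1) * (1 / real k)
     = (2 * (real k)\<^sup>2 - 2 * real k + 1) * Qs k - (2 * real k - 1)"
  proof -
    have q: "Qs (k+1) = Qs k - 1 / (real k)\<^sup>2" using Qs_split[OF k] by simp
    show ?thesis unfolding q using k by (simp add: field_simps power2_eq_square)
  qed
  moreover have eq: "gt k = (\<lambda>m. (real k)\<^sup>2 * (1 / (real (m + (k+1)))\<^sup>2) + (real k - 1)\<^sup>2 * (1 / (real (m + k))\<^sup>2)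
     - 2 * real k * (real k - 1) * (1 / real (m + k) - 1 / real (Suc m + k)))" by (rule ext) (rule gt_pf[OF k])
  ultimately show ?thesis by metis
qed

definition Lf :: "real \<Rightarrow> real" where
  "Lf x = 1/x + 1/(2*x^2) + 1/(6*x^3) - 1/(30*x^5)"

definition Uf :: "real \<Rightarrow> real" where
  "Uf x = Lf x + 1/(42*x^7)"

lemma Ldiff: assumes x: "x > 0"
  shows "Lf x - Lf (x+1) - 1/x^2 = -(x^2/30 + 7*x^3/30 + 8*x^4/15 + x^5/2 + x^6/6)/(x^7*(x+1)^7)"
proof -
  have b: "x + 1 \<noteq> 0" "x \<noteq> 0" using x by auto
  show ?thesis unfolding Lf_def using b by (simp add: divide_simps) (simp add: eval_nat_numeral algebra_simps)
qed

lemma Udiff: assumes x: "x > 0"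
  shows "Uf x - Uf (x+1) - 1/x^2 = (1/42 + x/6 + 7*x^2/15 + 3*x^3/5 + 3*x^4/10)/(x^7*(x+1)^7)"
proof -
  have b: "x + 1 \<noteq> 0" "x \<noteq> 0" using x by auto
  show ?thesis unfolding Uf_def Lf_def using b by (simp add: divide_simps) (simp add: eval_nat_numeral algebra_simps)
qed

lemma L_le: "x > 0 \<Longrightarrow> Lf x - Lf (x+1) \<le> 1/x^2"
proof -
  assume x: "x > 0"
  have "0 \<le> (x^2/30 + 7*x^3/30 + 8*x^4/15 + x^5/2 + x^6/6)/(x^7*(x+1)^7)"
    using x by (intro divide_nonneg_pos add_nonneg_nonneg) simp_all
  then show ?thesis using Ldiff[OF x] by linarith
qed

lemma U_ge: "x > 0 \<Longrightarrow> 1/x^2 \<le> Uf x - Uf (x+1)"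
proof -
  assume x: "x > 0"
  have "0 \<le> (1/42 + x/6 + 7*x^2/15 + 3*x^3/5 + 3*x^4/10)/(x^7*(x+1)^7)"
    using x by (intro divide_nonneg_pos add_nonneg_nonneg) simp_all
  then show ?thesis using Udiff[OF x] by linarith
qed

lemma Lf_lim: "(\<lambda>n. Lf (real (n + k))) \<longlonglongrightarrow> 0"
  unfolding Lf_def by real_asymp

lemma Uf_lim: "(\<lambda>n. Uf (real (n + k))) \<longlonglongrightarrow> 0"
  unfolding Uf_def Lf_def by real_asymp

lemma Qs_bounds:
  assumes k: "1 \<le> k"
  shows "Lf (real k) \<le> Qs k" "Qs k \<le> Uf (real k)"
proof -
  have t1: "(\<lambda>n. Lf (real (n + k)) - Lf (real (Suc n + k))) sums (Lf (real (0 + k)) - 0)"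
    by (rule telescope_sums'[OF Lf_lim])
  have t2: "(\<lambda>n. Uf (real (n + k)) - Uf (real (Suc n + k))) sums (Uf (real (0 + k)) - 0)"
    by (rule telescope_sums'[OF Uf_lim])
  have pos: "real (n + k) > 0" for n using k by simp
  have a: "Lf (real (n + k)) - Lf (real (Suc n + k)) \<le> 1 / (real (n + k))^2" for n
    using L_le[OF pos[of n]] by (simp add: add_ac)
  have b: "1 / (real (n + k))^2 \<le> Uf (real (n + k)) - Uf (real (Suc n + k))" for n
    using U_ge[OF pos[of n]] by (simp add: add_ac)
  show "Lf (real k) \<le> Qs k"
    using sums_le[OF a t1 sums_sq[OF k]] by simp
  show "Qs k \<le> Uf (real k)"
    using sums_le[OF b sums_sq[OF k] t2] by simp
qed

definition Ef :: "nat \<Rightarrow> real" where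
  "Ef k = 1 / (3 * real k) + 1 / (6 * (real k)\<^sup>2) + 1 / (10 * (real k)^3) + 1 / (15 * (real k)^4)"

lemma LE_id: assumes "x > 0"
  shows "(2 * x\<^sup>2 - 2 * x + 1) * Lf x - (2 * x - 1)
     = 1 / (3 * x) + 1 / (6 * x\<^sup>2) + 1 / (10 * x^3) + 1 / (15 * x^4) - 1/(30 * x^5)"
  unfolding Lf_def using assms by (simp add: divide_simps) (simp add: eval_nat_numeral algebra_simps)

lemma asym_bound:
  assumes k: "1 \<le> k"
  shows "\<bar>(2 * (real k)\<^sup>2 - 2 * real k + 1) * Qs k - (2 * real k - 1) - Ef k\<bar> \<le> 1 / (real k)^5"
proof -
  define x where "x = real k"
  have x: "x \<ge> 1" using k by (simp add: x_def)
  define c where "c = 2 * x\<^sup>2 - 2 * x + 1"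
  define r where "r = Qs k - Lf x"
  have r0: "0 \<le> r" using Qs_bounds(1)[OF k] by (simp add: r_def x_def)
  have r1: "r \<le> 1/(42*x^7)" using Qs_bounds(2)[OF k] by (simp add: r_def x_def Uf_def)
  have c0: "0 \<le> c" "c \<le> 2 * x\<^sup>2" unfolding c_def using x by (auto simp: power2_eq_square)
  have eq: "(2 * (real k)\<^sup>2 - 2 * real k + 1) * Qs k - (2 * real k - 1) - Ef k = c * r - 1/(30*x^5)"
    using LE_id[of x] x unfolding c_def r_def Ef_def x_def by (simp add: algebra_simps)
  have "c * r \<le> 2 * x\<^sup>2 * (1/(42*x^7))" using c0 r0 r1 by (intro mult_mono) auto
  also have "2 * x\<^sup>2 * (1/(42*x^7)) = 1/(21 * x^5)" using x by (simp add: field_simps power2_eq_square flip: power_Suc power_Suc2)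
  finally have u: "c * r \<le> 1/(21 * x^5)" .
  have l: "0 \<le> c * r" using c0 r0 by simp
  have "\<bar>c * r - 1/(30*x^5)\<bar> \<le> 1 / x^5"
  proof -
    define y where "y = 1 / x^5"
    have y: "y > 0" using x by (simp add: y_def)
    have "1/(21 * x^5) = y/21" "1/(30 * x^5) = y/30" by (simp_all add: y_def)
    then show ?thesis using u l y unfolding y_def[symmetric] by (simp add: abs_le_iff)
  qed
  then show ?thesis unfolding eq x_def .
qed

lemma shift_eq: assumes k: "1 \<le> k"
  shows "Sigma_term k (i + (k - 1)) = gt k i"
proof -
  obtain j where j: "k = j + 1" using k by (metis add.commute le_Suc_ex)
  have "Sigma_term k (i + (k - 1)) = (real (i + 1) / real ((i + j + 2) * (i + j + 1)))\<^sup>2"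
    using Sigma_term_val[OF k] j by (simp add: add_ac)
  also have "\<dots> = gt k i"
  proof -
    have e: "real ((i+j+2)*(i+j+1)) = (real (i + 1) + real k) * (real (i + 1) + real k - 1)"
      using j by (simp add: algebra_simps)
    show ?thesis unfolding e gt_def by (simp add: power_divide power_mult_distrib mult.commute)
  qed
  finally show ?thesis .
qed

lemma Sigma_sums: assumes k: "1 \<le> k"
  shows "Sigma_term k sums ((2 * (real k)\<^sup>2 - 2 * real k + 1) * Qs k - (2 * real k - 1))"
proof -
  have z: "Sigma_term k i = 0" if "i < k - 1" for i
    using that Sigma_term_val[OF k, of i] by simp
  have "(\<lambda>i. Sigma_term k (i + (k - 1))) = gt k" using shift_eq[OF k] by (intro ext) simp
  then show ?thesis using sums_zero_iff_shift[of "k - 1" "Sigma_term k", OF z] gt_sums[OF k] by simp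
qed

lemma Sigma_M_val: "1 \<le> k \<Longrightarrow> Sigma_M k = (2 * (real k)\<^sup>2 - 2 * real k + 1) * Qs k - (2 * real k - 1)"
  unfolding Sigma_M_def using Sigma_sums sums_unique by metis

lemma gt_less: assumes k: "1 \<le> k" shows "gt (k+1) m < gt k m"
proof -
  have "gt k m = (real (m+1))\<^sup>2 / ((real m + real k) * (real m + real k + 1))\<^sup>2"
    unfolding gt_def by (simp add: power_mult_distrib add_ac)
  moreover have "gt (k+1) m = (real (m+1))\<^sup>2 / ((real m + real k + 1) * (real m + real k + 2))\<^sup>2"
    unfolding gt_def by (simp add: power_mult_distrib add_ac)
  moreover have "((real m + real k) * (real m + real k + 1))\<^sup>2 < ((real m + real k + 1) * (real m + real k + 2))\<^sup>2"
    using k by (intro power_strict_mono mult_strict_mono) auto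
  moreover have "0 < ((real m + real k) * (real m + real k + 1))\<^sup>2" using k by simp
  ultimately show ?thesis by (simp add: divide_strict_left_mono)
qed

theorem mainTheorem11:
  shows "(\<forall>k::nat. k \<ge> 1 \<longrightarrow>
            summable (Sigma_term k)
          \<and> (\<lambda>m. (real (m + 1))\<^sup>2 / ((real (m + 1) + real k - 1)\<^sup>2 * (real (m + 1) + real k)\<^sup>2))
              sums Sigma_M k
          \<and> Sigma_M k = (2 * (real k)\<^sup>2 - 2 * real k + 1) * (\<Sum>n. 1 / (real (n + k))\<^sup>2)
                       - (2 * real k - 1))
     \<and> Sigma_M 1 = pi\<^sup>2 / 6 - 1
     \<and> Sigma_M 2 = 5 / 6 * pi\<^sup>2 - 8
     \<and> Sigma_M 3 = 13 / 6 * pi\<^sup>2 - 85 / 4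
     \<and> (\<forall>k::nat. k \<ge> 1 \<longrightarrow> Sigma_M (k + 1) < Sigma_M k)
     \<and> (\<lambda>k. Sigma_M k - (1 / (3 * real k) + 1 / (6 * (real k)\<^sup>2) + 1 / (10 * (real k)^3)
                        + 1 / (15 * (real k)^4)))
         \<in> O(\<lambda>k. 1 / (real k)^5)"
proof (intro conjI allI impI)
  fix k :: nat assume k: "1 \<le> k"
  show "summable (Sigma_term k)" using Sigma_sums[OF k] by (rule sums_summable)
  show "Sigma_M k = (2 * (real k)\<^sup>2 - 2 * real k + 1) * (\<Sum>n. 1 / (real (n + k))\<^sup>2) - (2 * real k - 1)"
    using Sigma_M_val[OF k] by (simp add: Qs_def)
  show "(\<lambda>m. (real (m + 1))\<^sup>2 / ((real (m + 1) + real k - 1)\<^sup>2 * (real (m + 1) + real k)\<^sup>2)) sums Sigma_M k"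
    using gt_sums[OF k] Sigma_M_val[OF k] unfolding gt_def by simp
next
  have q2: "Qs 2 = pi\<^sup>2 / 6 - 1" using Qs_split[of 1] Qs1 by (simp add: numeral_2_eq_2)
  have q3: "Qs 3 = pi\<^sup>2 / 6 - 5/4" using Qs_split[of 2] q2 by (simp add: numeral_2_eq_2 numeral_3_eq_3)
  show "Sigma_M 1 = pi\<^sup>2 / 6 - 1" using Sigma_M_val[of 1] Qs1 by simp
  show "Sigma_M 2 = 5 / 6 * pi\<^sup>2 - 8" using Sigma_M_val[of 2] q2 by simp
  show "Sigma_M 3 = 13 / 6 * pi\<^sup>2 - 85 / 4" using Sigma_M_val[of 3] q3 by simp
next
  fix k :: nat assume k: "1 \<le> k"
  have s: "(\<lambda>m. gt k m - gt (k+1) m) sums (Sigma_M k - Sigma_M (k+1))"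
    using Sigma_sums[OF k] Sigma_sums[of "k+1"] k gt_sums[OF k] gt_sums[of "k+1"]
      Sigma_M_val[OF k] Sigma_M_val[of "k+1"] by (intro sums_diff) auto
  have "0 < (\<Sum>m. gt k m - gt (k+1) m)"
    using s gt_less[OF k] by (intro suminf_pos) (auto simp: sums_iff)
  then show "Sigma_M (k + 1) < Sigma_M k" using s by (simp add: sums_iff)
next
  show "(\<lambda>k. Sigma_M k - (1 / (3 * real k) + 1 / (6 * (real k)\<^sup>2) + 1 / (10 * (real k)^3)
                        + 1 / (15 * (real k)^4))) \<in> O(\<lambda>k. 1 / (real k)^5)"
  proof (rule bigoI[where c=1])
    show "eventually (\<lambda>k. norm (Sigma_M k - (1 / (3 * real k) + 1 / (6 * (real k)\<^sup>2) + 1 / (10 * (real k)^3)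
                        + 1 / (15 * (real k)^4))) \<le> 1 * norm (1 / (real k)^5)) at_top"
      using eventually_ge_at_top[of "1::nat"]
    proof eventually_elim
      case (elim k)
      then show ?case using asym_bound[OF elim] Sigma_M_val[OF elim] by (simp add: Ef_def)
    qed
  qed
qed

end
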